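(* Let $P(x)=L(Ax)+\frac{\lambda}{2}\|x\|^2$ where $L:\mathbb{R}^n\to\mathbb{R}$ is convex, $A\in\mathbb{R}^{n\times d}$ and $\lambda>0$. Then for every $S\in V$ and every $\beta\in\mathbb{R}^n$ with $L^*(\beta)<\infty$, $$F(S)\ \ge\ D(\beta;S):=-L^*(\beta)-\frac{1}{2\lambda}\|A_S^\top\beta\|^2-\frac{1}{2\lambda}\|A_{S_>}^\top\beta\|_{k-|S|,2}^2 .$$
   Context: Let $d,k$ be positive integers with $k\le d$, and $[d]=\{1,\dots,d\}$ with its usual order. For nonempty $S\subseteq[d]$, $\max S$ is its largest element; set $\max\emptyset=0$. For $x\in\mathbb{R}^d$, $\mathrm{supp}(x)=\{i: x_i\neq0\}$. The state-space tree $G=(V,E)$: $V=\{S\subseteq[d]: |S|\le k \text{ and } k-|S|\le d-\max S\}$, with a directed edge $(S,T)\in E$ for $S,T\in V$ iff $T\neq\emptyset$ and $S=T\setminus\{\max T\}$. For $S\in V$, $\mathrm{desc}(S)$ is the set consisting of $S$ and all its descendants in $G$, $U(S)=\{x\in\mathbb{R}^d: \mathrm{supp}(x)\subseteq S' \text{ for some } S'\in\mathrm{desc}(S)\}$, $F(S)=\inf\{P(x): x\in U(S)\}$, and $S_>=\{i\in[d]: i>\max S\}$. $\|\cdot\|$ is the Euclidean norm. For $S\subseteq[d]$, $A_S$ is the submatrix of $A$ with columns indexed by $S$ (so $A_S^\top\beta\in\mathbb{R}^{|S|}$). For $z\in\mathbb{R}^m$ and integer $j\ge0$, $\|z\|_{j,2}$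 is the Euclidean norm of the vector obtained from $z$ by keeping (up to) $j$ entries of largest absolute value and setting the others to $0$ (so $\|z\|_{0,2}=0$). $L^*(\beta)=\sup_{y\in\mathbb{R}^n}\{\langle\beta,y\rangle-L(y)\}$ is the convex conjugate. *)

theory Defs
  imports "HOL-Analysis.Analysis"
begin

text \<open>Index set [d] = {1..d}; vectors of R^d are functions nat => real
  (only coordinates in {1..d} matter).
  The matrix A in R^(n x d) is given by its columns A j :: real^'n, j in {1..d}.\<close>

definition max0 :: "nat set \<Rightarrow> nat" where
  "max0 S = (if S = {} then 0 else Max S)"

definition supp :: "(nat \<Rightarrow> real) \<Rightarrow> nat set" where
  "supp x = {i. x i \<noteq> 0}"

definition Vset :: "nat \<Rightarrow> nat \<Rightarrow> nat set set" where
  "Vset d k = {S. S \<subseteq> {1..d} \<and> card S \<le> k \<and> k - card S \<le> d - max0 S}"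

definition Edges :: "nat \<Rightarrow> nat \<Rightarrow> (nat set \<times> nat set) set" where
  "Edges d k = {(S, T). S \<in> Vset d k \<and> T \<in> Vset d k \<and> T \<noteq> {} \<and> S = T - {max0 T}}"

definition desc :: "nat \<Rightarrow> nat \<Rightarrow> nat set \<Rightarrow> nat set set" where
  "desc d k S = {T. (S, T) \<in> (Edges d k)\<^sup>*}"

definition Uset :: "nat \<Rightarrow> nat \<Rightarrow> nat set \<Rightarrow> (nat \<Rightarrow> real) set" where
  "Uset d k S = {x. \<exists>S' \<in> desc d k S. supp x \<subseteq> S'}"

definition matvec :: "nat \<Rightarrow> (nat \<Rightarrow> real ^ 'n) \<Rightarrow> (nat \<Rightarrow> real) \<Rightarrow> real ^ 'n" where
  "matvec d A x = (\<Sum>j\<in>{1..d}. x j *\<^sub>R A j)"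

definition Pobj :: "nat \<Rightarrow> (real ^ 'n \<Rightarrow> real) \<Rightarrow> (nat \<Rightarrow> real ^ 'n) \<Rightarrow> real \<Rightarrow> (nat \<Rightarrow> real) \<Rightarrow> real" where
  "Pobj d L A lam x = L (matvec d A x) + lam / 2 * (\<Sum>j\<in>{1..d}. (x j)\<^sup>2)"

definition Fval :: "nat \<Rightarrow> nat \<Rightarrow> (real ^ 'n \<Rightarrow> real) \<Rightarrow> (nat \<Rightarrow> real ^ 'n) \<Rightarrow> real \<Rightarrow> nat set \<Rightarrow> ereal" where
  "Fval d k L A lam S = (INF x\<in>Uset d k S. ereal (Pobj d L A lam x))"

definition Lstar :: "(real ^ 'n \<Rightarrow> real) \<Rightarrow> real ^ 'n \<Rightarrow> ereal" where
  "Lstar L \<beta> = (SUP y. ereal (\<beta> \<bullet> y - L y))"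

definition Sgt :: "nat \<Rightarrow> nat set \<Rightarrow> nat set" where
  "Sgt d S = {i \<in> {1..d}. max0 S < i}"

text \<open>Top-j Euclidean norm of the vector z indexed by the finite set I:
  keep (up to) j entries of largest absolute value, zero the rest.
  The chosen index set J has min j |I| elements and every kept entry dominates
  every discarded one in absolute value (the value does not depend on ties).\<close>
definition topnorm :: "nat \<Rightarrow> nat set \<Rightarrow> (nat \<Rightarrow> real) \<Rightarrow> real" where
  "topnorm j I z = (let J = (SOME J. J \<subseteq> I \<and> card J = min j (card I) \<and>
        (\<forall>i\<in>J. \<forall>i'\<in>I - J. \<bar>z i'\<bar> \<le> \<bar>z i\<bar>))
     in sqrt (\<Sum>i\<in>J. (z i)\<^sup>2))"

definition Dval :: "nat \<Rightarrow> nat \<Rightarrow> (real ^ 'n \<Rightarrow> real) \<Rightarrow> (nat \<Rightarrow> real ^ 'n) \<Rightarrow> real \<Rightarrow> nat set \<Rightarrow> real ^ 'n \<Rightarrow> real" where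
  "Dval d k L A lam S \<beta> =
     - real_of_ereal (Lstar L \<beta>)
     - 1 / (2 * lam) * (\<Sum>j\<in>S. (A j \<bullet> \<beta>)\<^sup>2)
     - 1 / (2 * lam) * (topnorm (k - card S) (Sgt d S) (\<lambda>j. A j \<bullet> \<beta>))\<^sup>2"

end

theory Submission
  imports Defs
begin

lemma top_exists:
  fixes z :: "nat \<Rightarrow> real"
  assumes fin: "finite I"
  shows "\<exists>J. J \<subseteq> I \<and> card J = min j (card I) \<and> (\<forall>i\<in>J. \<forall>i'\<in>I - J. \<bar>z i'\<bar> \<le> \<bar>z i\<bar>)"
proof -
  define m where "m = min j (card I)"
  define C where "C = {J. J \<subseteq> I \<and> card J = m}"
  define g where "g J = (\<Sum>i\<in>J. (z i)\<^sup>2)" for J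
  have finC: "finite C" unfolding C_def using fin by (simp add: finite_subset[of _ "Pow I"] subset_iff)
  have "m \<le> card I" unfolding m_def by simp
  then obtain T where "T \<subseteq> I" "card T = m" by (metis obtain_subset_with_card_n)
  hence neC: "C \<noteq> {}" unfolding C_def by blast
  have "Max (g ` C) \<in> g ` C" using finC neC by simp
  then obtain J0 where J0: "J0 \<in> C" "g J0 = Max (g ` C)" by auto
  have maxJ: "g J \<le> g J0" if "J \<in> C" for J using J0(2) finC that by simp
  show ?thesis
  proof (intro exI[of _ J0] conjI ballI)
    show "J0 \<subseteq> I" "card J0 = min j (card I)" using J0 unfolding C_def m_def by auto
  next
    fix i i' assume i: "i \<in> J0" and i': "i' \<in> I - J0"
    show "\<bar>z i'\<bar> \<le> \<bar>z i\<bar>"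
    proof (rule ccontr)
      assume "\<not> ?thesis"
      hence lt: "(z i)\<^sup>2 < (z i')\<^sup>2"
        using abs_le_square_iff[of "z i'" "z i"] by linarith
      define J1 where "J1 = insert i' (J0 - {i})"
      have finJ0: "finite J0" using J0(1) fin unfolding C_def by (auto intro: finite_subset)
      have c1: "card J1 = card (J0 - {i}) + 1" unfolding J1_def using i' finJ0 by simp
      have c2: "card (J0 - {i}) = card J0 - 1" using i finJ0 by simp
      have c3: "card J0 \<ge> 1" using i finJ0 card_gt_0_iff[of J0] by auto
      have cJ1: "card J1 = card J0" using c1 c2 c3 by linarith
      have "J1 \<subseteq> I" using J0(1) i' unfolding C_def J1_def by auto
      hence J1C: "J1 \<in> C" using cJ1 J0(1) unfolding C_def by auto
      have "g J1 = (z i')\<^sup>2 + g J0 - (z i)\<^sup>2"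
        unfolding J1_def g_def using i i' finJ0 by (simp add: sum_diff1)
      thus False using maxJ[OF J1C] lt by linarith
    qed
  qed
qed

lemma top_bound:
  fixes z :: "nat \<Rightarrow> real"
  assumes fin: "finite I" and JI: "J \<subseteq> I" and cJ: "card J = min j (card I)"
    and dom: "\<forall>i\<in>J. \<forall>i'\<in>I - J. \<bar>z i'\<bar> \<le> \<bar>z i\<bar>"
    and TI: "T \<subseteq> I" and cT: "card T \<le> j"
  shows "(\<Sum>i\<in>T. (z i)\<^sup>2) \<le> (\<Sum>i\<in>J. (z i)\<^sup>2)"
proof -
  have finT: "finite T" and finJ: "finite J" using fin TI JI finite_subset by auto
  have dom2: "(z i')\<^sup>2 \<le> (z i)\<^sup>2" if "i \<in> J - T" "i' \<in> T - J" for i i'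
    using dom that TI by (simp add: abs_le_square_iff subset_iff)
  have cardle: "card (T - J) \<le> card (J - T)"
  proof (cases "card J = card I")
    case True
    hence "J = I" using JI fin by (simp add: card_subset_eq)
    hence "T - J = {}" using TI by auto
    thus ?thesis by (metis card.empty zero_le)
  next
    case False
    hence "card J = j" using cJ by linarith
    hence "card T \<le> card J" using cT by simp
    moreover have "card (T - J) = card T - card (T \<inter> J)" using finT by (simp add: card_Diff_subset_Int)
    moreover have "card (J - T) = card J - card (J \<inter> T)" using finJ by (simp add: card_Diff_subset_Int)
    moreover have "J \<inter> T = T \<inter> J" by blast
    ultimately show ?thesis by simp
  qed
  have key: "(\<Sum>i\<in>T - J. (z i)\<^sup>2) \<le> (\<Sum>i\<in>J - T. (z i)\<^sup>2)"
  proof (cases "J - T = {}")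
    case True
    have "card (T - J) = 0" using cardle True by (metis card.empty le_zero_eq)
    hence "T - J = {}" using finT by (meson card_0_eq finite_Diff)
    thus ?thesis by (metis sum.empty sum_nonneg zero_le_power2)
  next
    case False
    define mm where "mm = Min ((\<lambda>i. (z i)\<^sup>2) ` (J - T))"
    have f: "finite (J - T)" using finJ by simp
    have "mm \<in> (\<lambda>i. (z i)\<^sup>2) ` (J - T)" unfolding mm_def using f False by (intro Min_in) auto
    then obtain i0 where "mm = (z i0)\<^sup>2" by blast
    hence mm0: "0 \<le> mm" by simp
    have "(\<Sum>i\<in>T - J. (z i)\<^sup>2) \<le> (\<Sum>i\<in>T - J. mm)"
    proof (rule sum_mono)
      fix i' assume "i' \<in> T - J"
      have "mm \<in> (\<lambda>i. (z i)\<^sup>2) ` (J - T)" unfolding mm_def using f False by (intro Min_in) auto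
      then obtain i where "i \<in> J - T" "mm = (z i)\<^sup>2" by blast
      thus "(z i')\<^sup>2 \<le> mm" using dom2 \<open>i' \<in> T - J\<close> by simp
    qed
    also have "\<dots> = card (T - J) * mm" by simp
    also have "\<dots> \<le> card (J - T) * mm"
      using cardle mm0 by (intro mult_right_mono) auto
    also have "\<dots> = (\<Sum>i\<in>J - T. mm)" by simp
    also have "\<dots> \<le> (\<Sum>i\<in>J - T. (z i)\<^sup>2)"
      by (rule sum_mono) (simp add: mm_def f)
    finally show ?thesis .
  qed
  have "(\<Sum>i\<in>T. (z i)\<^sup>2) = (\<Sum>i\<in>T \<inter> J. (z i)\<^sup>2) + (\<Sum>i\<in>T - J. (z i)\<^sup>2)"
    using finT by (metis sum.Int_Diff)
  moreover have "(\<Sum>i\<in>J. (z i)\<^sup>2) = (\<Sum>i\<in>T \<inter> J. (z i)\<^sup>2) + (\<Sum>i\<in>J - T. (z i)\<^sup>2)"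
    using finJ by (metis sum.Int_Diff Int_commute)
  ultimately show ?thesis using key by linarith
qed

lemma desc_prop:
  assumes "(S, T) \<in> (Edges d k)\<^sup>*" "S \<in> Vset d k"
  shows "S \<subseteq> T \<and> T - S \<subseteq> Sgt d S \<and> T \<in> Vset d k"
  using assms(1)
proof (induction rule: rtrancl_induct)
  case base
  then show ?case using assms(2) by auto
next
  case (step T T')
  have T'V: "T' \<in> Vset d k" and ne: "T' \<noteq> {}" and Teq: "T = T' - {max0 T'}"
    using step(2) unfolding Edges_def by auto
  have finT': "finite T'" using T'V unfolding Vset_def using finite_subset by blast
  have m: "max0 T' = Max T'" using ne unfolding max0_def by simp
  have MT: "Max T' \<in> T'" using finT' ne by simp
  have ST: "S \<subseteq> T'" using step Teq by auto
  have MS: "Max T' \<notin> S" using step.IH Teq m by auto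
  have "Max T' \<in> Sgt d S"
  proof -
    have r: "Max T' \<in> {1..d}" using MT T'V unfolding Vset_def by auto
    have "max0 S < Max T'"
    proof (cases "S = {}")
      case True thus ?thesis using r by (simp add: max0_def)
    next
      case False
      have "finite S" using ST finT' finite_subset by blast
      hence "Max S \<in> S" using False by simp
      hence "Max S \<le> Max T'" using ST finT' by (meson Max_ge subsetD)
      moreover have "Max S \<noteq> Max T'" using MS \<open>Max S \<in> S\<close> by metis
      ultimately show ?thesis using False by (simp add: max0_def)
    qed
    thus ?thesis using r unfolding Sgt_def by auto
  qed
  moreover have "T' \<subseteq> insert (Max T') T" using Teq m by auto
  ultimately show ?case using step.IH ST T'V by auto
qed

theorem mainTheorem4:
  fixes d k :: nat and L :: "real ^ 'n \<Rightarrow> real" and A :: "nat \<Rightarrow> real ^ 'n"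
    and lam :: real and S :: "nat set" and \<beta> :: "real ^ 'n"
  assumes "1 \<le> k" and "k \<le> d"
    and "convex_on UNIV L"
    and "lam > 0"
    and "S \<in> Vset d k"
    and "Lstar L \<beta> < \<infinity>"
  shows "Fval d k L A lam S \<ge> ereal (Dval d k L A lam S \<beta>)"
proof -
  have lo: "ereal (\<beta> \<bullet> 0 - L 0) \<le> Lstar L \<beta>" unfolding Lstar_def by (rule SUP_upper) simp
  obtain r where r: "Lstar L \<beta> = ereal r" using lo assms(6)
    by (cases "Lstar L \<beta>") auto
  have Lb: "\<beta> \<bullet> y - L y \<le> r" for y
  proof -
    have "ereal (\<beta> \<bullet> y - L y) \<le> Lstar L \<beta>" unfolding Lstar_def by (rule SUP_upper) simp
    thus ?thesis using r by simp
  qed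
  define c where "c j = A j \<bullet> \<beta>" for j
  define I where "I = Sgt d S"
  have finI: "finite I" unfolding I_def Sgt_def by simp
  define J where "J = (SOME J. J \<subseteq> I \<and> card J = min (k - card S) (card I) \<and>
        (\<forall>i\<in>J. \<forall>i'\<in>I - J. \<bar>c i'\<bar> \<le> \<bar>c i\<bar>))"
  have Jp: "J \<subseteq> I \<and> card J = min (k - card S) (card I) \<and> (\<forall>i\<in>J. \<forall>i'\<in>I - J. \<bar>c i'\<bar> \<le> \<bar>c i\<bar>)"
    unfolding J_def by (rule someI_ex[OF top_exists[OF finI]])
  have tn: "(topnorm (k - card S) (Sgt d S) (\<lambda>j. A j \<bullet> \<beta>))\<^sup>2 = (\<Sum>i\<in>J. (c i)\<^sup>2)"
    unfolding topnorm_def Let_def J_def[symmetric] I_def[symmetric] c_def[symmetric]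
    by (simp add: sum_nonneg)
  have D: "Dval d k L A lam S \<beta> = - r - 1 / (2 * lam) * (\<Sum>j\<in>S. (c j)\<^sup>2) - 1 / (2 * lam) * (\<Sum>i\<in>J. (c i)\<^sup>2)"
    unfolding Dval_def tn r c_def by simp
  show ?thesis unfolding Fval_def
  proof (rule INF_greatest)
    fix x assume "x \<in> Uset d k S"
    then obtain S' where S'd: "S' \<in> desc d k S" and sx: "supp x \<subseteq> S'" unfolding Uset_def by auto
    have S'p: "S \<subseteq> S' \<and> S' - S \<subseteq> Sgt d S \<and> S' \<in> Vset d k"
      using desc_prop[OF _ assms(5)] S'd unfolding desc_def by auto
    have S'sub: "S' \<subseteq> {1..d}" and cS': "card S' \<le> k" using S'p unfolding Vset_def by auto
    have finS': "finite S'" using S'sub finite_subset by blast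
    have inner: "\<beta> \<bullet> matvec d A x = (\<Sum>j\<in>{1..d}. x j * c j)"
      unfolding matvec_def c_def by (simp add: inner_sum_right inner_commute)
    have pt: "x j * c j + lam / 2 * (x j)\<^sup>2 \<ge> (if j \<in> S' then - (c j)\<^sup>2 / (2 * lam) else 0)" for j
    proof (cases "j \<in> S'")
      case True
      have "0 \<le> (lam * x j + c j)\<^sup>2" by simp
      hence "0 \<le> ((lam * x j + c j)\<^sup>2) / (2 * lam)" using assms(4) by simp
      moreover have "((lam * x j + c j)\<^sup>2) / (2 * lam) = x j * c j + lam / 2 * (x j)\<^sup>2 + (c j)\<^sup>2 / (2 * lam)"
        using assms(4) by (simp add: field_simps power2_eq_square)
      ultimately show ?thesis using True by simp
    next
      case False
      hence "x j = 0" using sx unfolding supp_def by auto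
      thus ?thesis using False by simp
    qed
    have s0: "(\<Sum>j\<in>{1..d}. (if j \<in> S' then - (c j)\<^sup>2 / (2 * lam) else 0)) \<le> (\<Sum>j\<in>{1..d}. x j * c j + lam / 2 * (x j)\<^sup>2)"
      by (rule sum_mono) (rule pt)
    define g where "g j = - (c j)\<^sup>2 / (2 * lam)" for j
    have "(\<Sum>j\<in>{1..d}. (if j \<in> S' then g j else 0)) = sum g ({1..d} \<inter> S')"
      by (rule sum.inter_restrict[symmetric]) simp
    also have "{1..d} \<inter> S' = S'" using S'sub by blast
    finally have "(\<Sum>j\<in>{1..d}. (if j \<in> S' then - (c j)\<^sup>2 / (2 * lam) else 0)) = (\<Sum>j\<in>S'. - (c j)\<^sup>2 / (2 * lam))"
      unfolding g_def .
    also have "\<dots> = - 1 / (2 * lam) * (\<Sum>j\<in>S'. (c j)\<^sup>2)"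
      by (simp add: sum_distrib_left sum_negf)
    finally have s1: "(\<Sum>j\<in>{1..d}. x j * c j + lam / 2 * (x j)\<^sup>2) \<ge> - 1 / (2 * lam) * (\<Sum>j\<in>S'. (c j)\<^sup>2)"
      using s0 by linarith
    have split: "(\<Sum>j\<in>S'. (c j)\<^sup>2) = (\<Sum>j\<in>S. (c j)\<^sup>2) + (\<Sum>j\<in>S' - S. (c j)\<^sup>2)"
      using S'p finS' by (metis add.commute sum.subset_diff)
    have "card (S' - S) \<le> k - card S"
      using S'p finS' cS' card_Diff_subset[of S S'] finite_subset[of S S'] by linarith
    hence tb: "(\<Sum>j\<in>S' - S. (c j)\<^sup>2) \<le> (\<Sum>i\<in>J. (c i)\<^sup>2)"
      using top_bound[OF finI, of J "k - card S" c "S' - S"] Jp S'p unfolding I_def by auto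
    have "(\<Sum>j\<in>S'. (c j)\<^sup>2) \<le> (\<Sum>j\<in>S. (c j)\<^sup>2) + (\<Sum>i\<in>J. (c i)\<^sup>2)" using split tb by linarith
    hence s2: "- 1 / (2 * lam) * (\<Sum>j\<in>S'. (c j)\<^sup>2) \<ge> - 1 / (2 * lam) * (\<Sum>j\<in>S. (c j)\<^sup>2) - 1 / (2 * lam) * (\<Sum>i\<in>J. (c i)\<^sup>2)"
    proof -
      have h: "1/(2*lam) * (\<Sum>j\<in>S'. (c j)\<^sup>2) \<le> 1/(2*lam) * ((\<Sum>j\<in>S. (c j)\<^sup>2) + (\<Sum>i\<in>J. (c i)\<^sup>2))"
        using \<open>(\<Sum>j\<in>S'. (c j)\<^sup>2) \<le> _\<close> assms(4) by (intro mult_left_mono) auto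
      have e: "- 1 / (2 * lam) * X = - (1/(2*lam) * X)" for X by simp
      show ?thesis unfolding e using h by (simp add: distrib_left)
    qed
    have Pd: "Pobj d L A lam x = L (matvec d A x) + (\<Sum>j\<in>{1..d}. x j * c j + lam / 2 * (x j)\<^sup>2) - (\<Sum>j\<in>{1..d}. x j * c j)"
    proof -
      have "(\<Sum>j\<in>{1..d}. x j * c j + lam / 2 * (x j)\<^sup>2) = (\<Sum>j\<in>{1..d}. x j * c j) + (\<Sum>j\<in>{1..d}. lam / 2 * (x j)\<^sup>2)"
        by (rule sum.distrib)
      moreover have "(\<Sum>j\<in>{1..d}. lam / 2 * (x j)\<^sup>2) = lam / 2 * (\<Sum>j\<in>{1..d}. (x j)\<^sup>2)"
        by (rule sum_distrib_left[symmetric])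
      ultimately show ?thesis unfolding Pobj_def by linarith
    qed
    have "Dval d k L A lam S \<beta> \<le> Pobj d L A lam x"
      using Pd D s1 s2 Lb[of "matvec d A x"] inner by linarith
    thus "ereal (Dval d k L A lam S \<beta>) \<le> ereal (Pobj d L A lam x)" by simp
  qed
qed

end
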